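(* Let $n,m,T$ be positive integers, $\epsilon\ge 0$, and let $x(0),\dots,x(T)\in\mathbb{R}^n$ and $u(0),\dots,u(T-1)\in\mathbb{R}^m$ be given data. For $i\in\{0,\dots,T-1\}$ let $$\mathcal{C}_i:=\{(A,B)\in\mathbb{R}^{n\times n}\times\mathbb{R}^{n\times m}:\ \exists d\in\mathbb{R}^n \text{ with } x(i+1)=Ax(i)+Bu(i)+d,\ dd^\top\preceq\epsilon I\},$$ and $\mathcal{I}:=\bigcap_{i=0}^{T-1}\mathcal{C}_i$. Suppose there exist $P\in\mathbb{R}^{n\times n}$ symmetric, $Y\in\mathbb{R}^{m\times n}$, and scalars $\beta,\tau_0,\dots,\tau_{T-1}$ with $\beta>0$, $\tau_i\ge 0$ for all $i$, $P\succ 0$, and $$\begin{bmatrix} P-\beta I & 0 & 0 & 0\\ 0 & -P & -Y^\top & 0\\ 0 & -Y & 0 & Y\\ 0 & 0 & Y^\top & P\end{bmatrix}-\sum_{i=0}^{T-1}\tau_i\begin{bmatrix} I & x(i+1)\\ 0 & -x(i)\\ 0 & -u(i)\\ 0 & 0\end{bmatrix}\begin{bmatrix}\epsilon I & 0\\ 0 & -1\end{bmatrix}\begin{bmatrix} I & x(i+1)\\ 0 & -x(i)\\ 0 & -u(i)\\ 0 & 0\end{bmatrix}^\top\succeq 0.$$ Then there exist a symmetric $P\succ 0$ and $K\in\mathbb{R}^{m\times n}$ such that $(A+BK)P(A+BK)^\top-P\prec 0$ for all $(A,B)\in\mathcal{I}$.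
   Context: $\succ$ ($\succeq$) and $\prec$ ($\preceq$) denote positive (semi)definiteness and negative (semi)definiteness of symmetric matrices. In the displayed block matrices, the block rows/columns have sizes $n,n,m,n$ (first matrix) and the $4\times 2$ block matrices have row-block sizes $n,n,m,n$ and column-block sizes $n,1$; the zero blocks and identity blocks have compatible dimensions. *)

theory Defs
  imports "HOL-Analysis.Analysis"
begin

text \<open>Matrices are HOL-Analysis matrices: real^'c^'r has rows indexed by 'r and
columns indexed by 'c. Dimensions n, m are the cardinalities of the finite types 'n, 'm.\<close>

definition psd :: "real^'k^'k \<Rightarrow> bool" where
  "psd M \<longleftrightarrow> transpose M = M \<and> (\<forall>v. 0 \<le> v \<bullet> (M *v v))"

definition pd :: "real^'k^'k \<Rightarrow> bool" where
  "pd M \<longleftrightarrow> transpose M = M \<and> (\<forall>v. v \<noteq> 0 \<longrightarrow> 0 < v \<bullet> (M *v v))"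

definition nd :: "real^'k^'k \<Rightarrow> bool" where
  "nd M \<longleftrightarrow> pd (- M)"

definition outer :: "real^'k \<Rightarrow> real^'k \<Rightarrow> real^'k^'k" where
  "outer a b = (\<chi> i j. a $ i * b $ j)"

definition Cset :: "real \<Rightarrow> (nat \<Rightarrow> real^'n) \<Rightarrow> (nat \<Rightarrow> real^'m) \<Rightarrow> nat
    \<Rightarrow> ((real^'n^'n) \<times> (real^'m^'n)) set" where
  "Cset \<epsilon> x u i = {(A, B). \<exists>d. x (Suc i) = A *v x i + B *v u i + d
                              \<and> psd (\<epsilon> *\<^sub>R mat 1 - outer d d)}"

definition Iset :: "real \<Rightarrow> (nat \<Rightarrow> real^'n) \<Rightarrow> (nat \<Rightarrow> real^'m) \<Rightarrow> nat
    \<Rightarrow> ((real^'n^'n) \<times> (real^'m^'n)) set" where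
  "Iset \<epsilon> x u T = (\<Inter>i\<in>{..<T}. Cset \<epsilon> x u i)"

text \<open>Block index type for block sizes n, n, m, n.\<close>
type_synonym ('n, 'm) blk = "'n + ('n + ('m + 'n))"

definition M0 :: "real^'n^'n \<Rightarrow> real^'n^'m \<Rightarrow> real
    \<Rightarrow> real^(('n::finite, 'm::finite) blk)^(('n, 'm) blk)" where
  "M0 P Y \<beta> = (\<chi> r c. case (r, c) of
      (Inl i, Inl j) \<Rightarrow> (P - \<beta> *\<^sub>R mat 1) $ i $ j
    | (Inr (Inl i), Inr (Inl j)) \<Rightarrow> - P $ i $ j
    | (Inr (Inl i), Inr (Inr (Inl j))) \<Rightarrow> - (transpose Y) $ i $ j
    | (Inr (Inr (Inl i)), Inr (Inl j)) \<Rightarrow> - Y $ i $ j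
    | (Inr (Inr (Inl i)), Inr (Inr (Inr j))) \<Rightarrow> Y $ i $ j
    | (Inr (Inr (Inr i)), Inr (Inr (Inl j))) \<Rightarrow> (transpose Y) $ i $ j
    | (Inr (Inr (Inr i)), Inr (Inr (Inr j))) \<Rightarrow> P $ i $ j
    | _ \<Rightarrow> 0)"

text \<open>The 4x2 block matrix [I, x(k+1); 0, -x(k); 0, -u(k); 0, 0] (column blocks n, 1).\<close>
definition Nmat :: "(nat \<Rightarrow> real^'n) \<Rightarrow> (nat \<Rightarrow> real^'m) \<Rightarrow> nat
    \<Rightarrow> real^('n + unit)^(('n::finite, 'm::finite) blk)" where
  "Nmat x u k = (\<chi> r c. case (r, c) of
      (Inl i, Inl j) \<Rightarrow> (mat 1 :: real^'n^'n) $ i $ j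
    | (Inl i, Inr _) \<Rightarrow> x (Suc k) $ i
    | (Inr (Inl i), Inr _) \<Rightarrow> - x k $ i
    | (Inr (Inr (Inl i)), Inr _) \<Rightarrow> - u k $ i
    | _ \<Rightarrow> 0)"

definition Mid :: "real \<Rightarrow> real^('n::finite + unit)^('n + unit)" where
  "Mid \<epsilon> = (\<chi> r c. case (r, c) of
      (Inl i, Inl j) \<Rightarrow> \<epsilon> * (mat 1 :: real^'n^'n) $ i $ j
    | (Inr _, Inr _) \<Rightarrow> -1
    | _ \<Rightarrow> 0)"

end

theory Submission
  imports Defs
begin


lemma sum_UNIV_plus: "(\<Sum>x\<in>(UNIV::('a::finite+'b::finite) set). f x) = (\<Sum>x\<in>UNIV. f (Inl x)) + (\<Sum>x\<in>UNIV. f (Inr x))"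
proof -
  have "(UNIV::('a+'b) set) = UNIV <+> UNIV" by auto
  moreover have "sum f (UNIV <+> UNIV) = (\<Sum>x\<in>UNIV. f (Inl x)) + (\<Sum>x\<in>UNIV. f (Inr x))"
    by (subst sum.Plus) (auto simp: comp_def)
  ultimately show ?thesis by metis
qed

lemma qf_def2: "(v::real^'k) \<bullet> (M *v w) = (\<Sum>i\<in>UNIV. \<Sum>j\<in>UNIV. v$i * M$i$j * w$j)"
  by (simp add: inner_vec_def matrix_vector_mult_def sum_distrib_left mult.assoc)

lemma qf_sandwich: "(v::real^'k) \<bullet> ((N ** D ** transpose N) *v v) = (transpose N *v v) \<bullet> (D *v (transpose N *v v))"
  by (metis dot_lmul_matrix matrix_vector_mul_assoc transpose_matrix_vector)

lemma mv_sum: "(sum f S) *v (v::real^'k) = (\<Sum>i\<in>S. f i *v v)"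
  unfolding vec_eq_iff matrix_vector_mult_def sum_component sum_distrib_right
  by (simp add: sum_component) (intro allI sum.swap)



definition bv :: "real^'n \<Rightarrow> real^'n \<Rightarrow> real^'m \<Rightarrow> real^'n \<Rightarrow> real^(('n::finite,'m::finite) blk)" where
 "bv w1 w2 w3 w4 = (\<chi> r. case r of Inl i \<Rightarrow> w1$i | Inr (Inl i) \<Rightarrow> w2$i | Inr (Inr (Inl i)) \<Rightarrow> w3$i | Inr (Inr (Inr i)) \<Rightarrow> w4$i)"

lemma M0_qf: "bv w1 w2 w3 w4 \<bullet> (M0 P Y \<beta> *v bv w1 w2 w3 w4) =
   w1 \<bullet> ((P - \<beta> *\<^sub>R mat 1) *v w1) - w2 \<bullet> (P *v w2) - w2 \<bullet> (transpose Y *v w3) - w3 \<bullet> (Y *v w2)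
   + w3 \<bullet> (Y *v w4) + w4 \<bullet> (transpose Y *v w3) + w4 \<bullet> (P *v w4)"
  unfolding qf_def2
  apply (simp only: sum_UNIV_plus M0_def bv_def vec_lambda_beta sum.case prod.case)
  apply (simp add: sum_negf sum.distrib sum_subtractf)
  done



lemma delta_r1: "(\<Sum>j\<in>UNIV. (f j::real) * (if j = (a::'n::finite) then 1 else 0)) = f a"
  by (simp add: if_distrib[of "\<lambda>z. _ * z"] cong: if_cong)
lemma delta_r2: "(\<Sum>j\<in>UNIV. (f j::real) * (if a = (j::'n::finite) then 1 else 0)) = f a"
  by (simp add: if_distrib[of "\<lambda>z. _ * z"] cong: if_cong)

lemma delta_l1: "(\<Sum>j\<in>UNIV. (if j = (a::'n::finite) then 1 else 0) * (f j::real)) = f a"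
  by (simp add: if_distrib[of "\<lambda>z. z * _"] cong: if_cong)
lemma delta_l2: "(\<Sum>j\<in>UNIV. (if a = (j::'n::finite) then 1 else 0) * (f j::real)) = f a"
  by (simp add: if_distrib[of "\<lambda>z. z * _"] cong: if_cong)

definition nv :: "real^'n \<Rightarrow> real \<Rightarrow> real^('n::finite + unit)" where
 "nv a s = (\<chi> c. case c of Inl j \<Rightarrow> a$j | Inr _ \<Rightarrow> s)"

lemma Nmat_tv: fixes x :: "nat \<Rightarrow> real^'n::finite" and u :: "nat \<Rightarrow> real^'m::finite" shows "transpose (Nmat x u k) *v bv w1 w2 w3 w4 = nv w1 (x (Suc k) \<bullet> w1 - x k \<bullet> w2 - u k \<bullet> w3)"
  unfolding vec_eq_iff
proof
  fix c :: "'n + unit"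
  show "(transpose (Nmat x u k) *v bv w1 w2 w3 w4) $ c = nv w1 (x (Suc k) \<bullet> w1 - x k \<bullet> w2 - u k \<bullet> w3) $ c"
    apply (cases c)
     apply (simp_all add: matrix_vector_mult_def transpose_def sum_UNIV_plus Nmat_def bv_def nv_def mat_def inner_vec_def)
    apply (simp_all add: sum_negf delta_r1 delta_l1)
    done
qed

lemma Mid_qf: "nv a s \<bullet> (Mid \<epsilon> *v nv a s) = \<epsilon> * (a \<bullet> a) - s^2"
  unfolding qf_def2
  apply (simp add: sum_UNIV_plus Mid_def nv_def mat_def inner_vec_def power2_eq_square)
  apply (simp add: sum_distrib_left if_distrib[of "\<lambda>z. _ * z"] if_distrib[of "\<lambda>z. z * _"] mult_ac cong: if_cong)
  done



lemma dot_transp: "(x::real^'n) \<bullet> (M *v y) = y \<bullet> (transpose M *v x)"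
  by (metis dot_lmul_matrix inner_commute transpose_matrix_vector)

lemma scaleR_mv: "(c *\<^sub>R M) *v (v::real^'n) = c *\<^sub>R (M *v v)"
  by (simp add: vec_eq_iff matrix_vector_mult_def sum_distrib_left mult_ac)

lemma uminus_mv: "(- M) *v (v::real^'n) = - (M *v v)"
  by (simp add: vec_eq_iff matrix_vector_mult_def sum_negf)

lemma transpose_diff': "transpose (X - Y) = transpose X - transpose (Y::real^'n^'m)"
  by (simp add: vec_eq_iff transpose_def)
lemma transpose_uminus': "transpose (- X) = - transpose (X::real^'n^'m)"
  by (simp add: vec_eq_iff transpose_def)
lemma transpose_add': "transpose (X + Y) = transpose X + transpose (Y::real^'n^'m)"
  by (simp add: vec_eq_iff transpose_def)

lemma outer_qf: "w \<bullet> (outer d d *v w) = (d \<bullet> (w::real^'n))^2"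
  unfolding qf_def2
  by (simp add: outer_def inner_vec_def power2_eq_square sum_distrib_left sum_distrib_right mult_ac)

lemma dev_qf: "w \<bullet> ((e *\<^sub>R mat 1 - outer d d) *v w) = e * (w \<bullet> w) - (d \<bullet> (w::real^'n))^2"
  by (simp add: matrix_vector_mult_diff_rdistrib inner_diff_right outer_qf scaleR_mv matrix_vector_mul_lid)

lemma sum_mv_qf: "v \<bullet> ((\<Sum>i<T. t i *\<^sub>R X i) *v (v::real^'n)) = (\<Sum>i<T. t i * (v \<bullet> (X i *v v)))"
  by (simp add: mv_sum inner_sum_right scaleR_mv)



lemma mv_uminus: "M *v (- v) = - (M *v (v::real^'n))"
  by (simp add: vec_eq_iff matrix_vector_mult_def sum_negf)

theorem proposition1:
  fixes x :: "nat \<Rightarrow> real^'n" and u :: "nat \<Rightarrow> real^'m"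
    and T :: nat and \<epsilon> :: real
    and P :: "real^'n^'n" and Y :: "real^'n^'m" and \<beta> :: real and \<tau> :: "nat \<Rightarrow> real"
  assumes "T > 0" and "\<epsilon> \<ge> 0"
    and "transpose P = P" and "\<beta> > 0" and "\<forall>i<T. \<tau> i \<ge> 0" and "pd P"
    and "psd (M0 P Y \<beta> - (\<Sum>i<T. \<tau> i *\<^sub>R
            (Nmat x u i ** Mid \<epsilon> ** transpose (Nmat x u i))))"
  shows "\<exists>P' :: real^'n^'n. \<exists>K :: real^'n^'m. transpose P' = P' \<and> pd P' \<and>
           (\<forall>(A, B) \<in> Iset \<epsilon> x u T.
              nd ((A + B ** K) ** P' ** transpose (A + B ** K) - P'))"
proof -
  note symP = assms(3) and pdP = assms(6) and tau = assms(5) and beta = assms(4)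
  have "\<forall>z. P *v z = 0 \<longrightarrow> z = 0"
  proof (intro allI impI)
    fix z assume "P *v z = 0"
    then have "z \<bullet> (P *v z) = 0" by simp
    then show "z = 0" using pdP unfolding pd_def by force
  qed
  then obtain Q where QP: "Q ** P = mat 1" using matrix_left_invertible_ker by blast
  have PQt: "P ** transpose Q = mat 1"
    by (metis QP matrix_transpose_mul symP transpose_mat)
  define K where "K = Y ** Q"
  have main: "nd ((A + B ** K) ** P ** transpose (A + B ** K) - P)"
    if AB: "(A, B) \<in> Iset \<epsilon> x u T" for A B
  proof -
    define E where "E = A + B ** K"
    have sym: "transpose (- (E ** P ** transpose E - P)) = - (E ** P ** transpose E - P)"
      by (simp add: transpose_uminus' transpose_diff' matrix_transpose_mul symP matrix_mul_assoc)
    have pos: "0 < w \<bullet> ((- (E ** P ** transpose E - P)) *v w)" if "w \<noteq> 0" for w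
    proof -
      define a where "a = transpose A *v w"
      define b where "b = transpose B *v w"
      define g where "g = transpose Y *v b"
      define h where "h = transpose Q *v g"
      define y where "y = transpose E *v w"
      have Ph: "P *v h = g" unfolding h_def by (simp only: matrix_vector_mul_assoc PQt matrix_vector_mul_lid)
      have y: "y = a + h"
        unfolding y_def E_def K_def a_def h_def g_def b_def
        by (simp only: transpose_add' matrix_transpose_mul matrix_vector_mult_add_rdistrib matrix_vector_mul_assoc matrix_mul_assoc)
      have lhs: "w \<bullet> ((- (E ** P ** transpose E - P)) *v w) = w \<bullet> (P *v w) - y \<bullet> (P *v y)"
        unfolding y_def
        by (simp add: uminus_mv matrix_vector_mult_diff_rdistrib inner_diff_right qf_sandwich)
      define v where "v = bv w a b (- h)"
      have terms: "0 \<le> v \<bullet> ((Nmat x u i ** Mid \<epsilon> ** transpose (Nmat x u i)) *v v)" if "i < T" for i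
      proof -
        from AB that have "(A, B) \<in> Cset \<epsilon> x u i" unfolding Iset_def by auto
        then obtain d where d: "x (Suc i) = A *v x i + B *v u i + d"
          and pd: "psd (\<epsilon> *\<^sub>R mat 1 - outer d d)" unfolding Cset_def by auto
        have "x (Suc i) \<bullet> w - x i \<bullet> a - u i \<bullet> b = d \<bullet> w"
        proof -
          have "w \<bullet> (A *v x i) = x i \<bullet> a" "w \<bullet> (B *v u i) = u i \<bullet> b"
            unfolding a_def b_def by (rule dot_transp)+
          moreover have "x (Suc i) \<bullet> w = (A *v x i) \<bullet> w + (B *v u i) \<bullet> w + d \<bullet> w"
            unfolding d by (simp add: inner_add_left)
          ultimately show ?thesis by (simp add: inner_commute)
        qed
        moreover have "0 \<le> \<epsilon> * (w \<bullet> w) - (d \<bullet> w)^2"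
          using pd unfolding psd_def dev_qf[symmetric] by blast
        ultimately show ?thesis
          unfolding v_def qf_sandwich Nmat_tv Mid_qf by simp
      qed
      have "0 \<le> v \<bullet> ((M0 P Y \<beta> - (\<Sum>i<T. \<tau> i *\<^sub>R
            (Nmat x u i ** Mid \<epsilon> ** transpose (Nmat x u i)))) *v v)"
        using assms(7) unfolding psd_def by blast
      also have "\<dots> = v \<bullet> (M0 P Y \<beta> *v v) - (\<Sum>i<T. \<tau> i * (v \<bullet> ((Nmat x u i ** Mid \<epsilon> ** transpose (Nmat x u i)) *v v)))"
        by (simp add: matrix_vector_mult_diff_rdistrib inner_diff_right sum_mv_qf)
      finally have "0 \<le> v \<bullet> (M0 P Y \<beta> *v v)"
        using sum_nonneg[of "{..<T}" "\<lambda>i. \<tau> i * (v \<bullet> ((Nmat x u i ** Mid \<epsilon> ** transpose (Nmat x u i)) *v v))"]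
          tau terms by (smt (verit, best) lessThan_iff mult_nonneg_nonneg)
      then have M: "0 \<le> w \<bullet> ((P - \<beta> *\<^sub>R mat 1) *v w) - a \<bullet> (P *v a) - a \<bullet> (transpose Y *v b) - b \<bullet> (Y *v a)
         + b \<bullet> (Y *v (-h)) + (-h) \<bullet> (transpose Y *v b) + (-h) \<bullet> (P *v (-h))"
        unfolding v_def M0_qf .
      have e1: "w \<bullet> ((P - \<beta> *\<^sub>R mat 1) *v w) = w \<bullet> (P *v w) - \<beta> * (w \<bullet> w)"
        by (simp add: matrix_vector_mult_diff_rdistrib inner_diff_right scaleR_mv matrix_vector_mul_lid)
      have e2: "b \<bullet> (Y *v a) = a \<bullet> g" unfolding g_def by (rule dot_transp)
      have e3: "b \<bullet> (Y *v (-h)) = - (h \<bullet> g)" unfolding g_def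
        by (metis dot_transp inner_minus_left mv_uminus inner_minus_right)
      have e4: "(-h) \<bullet> (P *v (-h)) = h \<bullet> g"
        using Ph by (simp add: mv_uminus)
      have e5: "h \<bullet> (P *v a) = a \<bullet> g"
        using dot_transp[of h P a] symP Ph by simp
      have yPy: "y \<bullet> (P *v y) = a \<bullet> (P *v a) + 2 * (a \<bullet> g) + h \<bullet> g"
        unfolding y using Ph e5 by (simp add: matrix_vector_right_distrib inner_add_left inner_add_right)
      have "0 < \<beta> * (w \<bullet> w)" using beta that by simp
      with M e1 e2 e3 e4 yPy lhs show ?thesis unfolding g_def by simp
    qed
    show ?thesis
      unfolding nd_def pd_def E_def[symmetric] using sym pos by blast
  qed
  show ?thesis
    apply (rule exI[of _ P], rule exI[of _ K])
    using symP pdP main by auto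
qed

end
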